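(* For online Facility Location with $\Delta$-MRF arrivals, there are instances (with $\Delta\to\infty$) for which no online algorithm is better than $\Omega(\Delta/\log\Delta)$-competitive.
   Context: Facility Location: clients (demands) are points of a metric space; a solution opens facilities at points (each with an opening cost) and connects each client to an open facility at cost equal to their distance; cost is total opening plus connection cost. Online: clients arrive one by one and after each arrival the algorithm irrevocably opens facilities/makes connections so all clients so far are served. $\Delta$-MRF arrivals: the sequence of $n$ clients $Y=(Y_1,\dots,Y_n)$ is drawn from a known distribution on $\Omega_1\times\dots\times\Omega_n$ of the form $\Pr[u]\propto\exp(\sum_i\psi_i(u_i)+\sum_{e\in E'}\psi_e((u_j)_{j\in e}))$ for a hypergraph $E'\subseteq2^{[n]}$ and potentials, whose weighted maximum degree $\max_i\max_u|\sum_{e\ni i}\psi_e((u_j)_{j\in e})|$ is $\Delta$. An algorithm is $\alpha$-competitive if $\mathbb{E}[\mathrm{ALG}(Y)]\le\alpha\,\mathbb{E}[\mathrm{OPT}(Y)]$. *)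

theory Defs
  imports "HOL-Probability.Probability"
begin

definition metric_on :: "nat set \<Rightarrow> (nat \<Rightarrow> nat \<Rightarrow> real) \<Rightarrow> bool" where
  "metric_on M d \<longleftrightarrow>
     (\<forall>x\<in>M. \<forall>y\<in>M. 0 \<le> d x y \<and> d x y = d y x \<and> (d x y = 0 \<longleftrightarrow> x = y)) \<and>
     (\<forall>x\<in>M. \<forall>y\<in>M. \<forall>z\<in>M. d x z \<le> d x y + d y z)"

definition mrf_support :: "nat \<Rightarrow> (nat \<Rightarrow> nat set) \<Rightarrow> nat list set" where
  "mrf_support n \<Omega> = {u. length u = n \<and> (\<forall>i<n. u ! i \<in> \<Omega> i)}"

definition mrf_weight ::
  "nat \<Rightarrow> (nat \<Rightarrow> nat \<Rightarrow> real) \<Rightarrow> nat set set \<Rightarrow> (nat set \<Rightarrow> (nat \<Rightarrow> nat) \<Rightarrow> real)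
     \<Rightarrow> nat list \<Rightarrow> real" where
  "mrf_weight n \<psi>1 E \<psi>E u =
     exp ((\<Sum>i<n. \<psi>1 i (u ! i)) + (\<Sum>e\<in>E. \<psi>E e (restrict (\<lambda>j. u ! j) e)))"

definition mrf_prob ::
  "nat \<Rightarrow> (nat \<Rightarrow> nat set) \<Rightarrow> (nat \<Rightarrow> nat \<Rightarrow> real) \<Rightarrow> nat set set
     \<Rightarrow> (nat set \<Rightarrow> (nat \<Rightarrow> nat) \<Rightarrow> real) \<Rightarrow> nat list \<Rightarrow> real" where
  "mrf_prob n \<Omega> \<psi>1 E \<psi>E u =
     mrf_weight n \<psi>1 E \<psi>E u / (\<Sum>v\<in>mrf_support n \<Omega>. mrf_weight n \<psi>1 E \<psi>E v)"

definition mrf_expect ::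
  "nat \<Rightarrow> (nat \<Rightarrow> nat set) \<Rightarrow> (nat \<Rightarrow> nat \<Rightarrow> real) \<Rightarrow> nat set set
     \<Rightarrow> (nat set \<Rightarrow> (nat \<Rightarrow> nat) \<Rightarrow> real) \<Rightarrow> (nat list \<Rightarrow> real) \<Rightarrow> real" where
  "mrf_expect n \<Omega> \<psi>1 E \<psi>E g =
     (\<Sum>u\<in>mrf_support n \<Omega>. mrf_prob n \<Omega> \<psi>1 E \<psi>E u * g u)"

definition mrf_Delta ::
  "nat \<Rightarrow> (nat \<Rightarrow> nat set) \<Rightarrow> nat set set \<Rightarrow> (nat set \<Rightarrow> (nat \<Rightarrow> nat) \<Rightarrow> real) \<Rightarrow> real" where
  "mrf_Delta n \<Omega> E \<psi>E =
     Max {\<bar>\<Sum>e\<in>{e\<in>E. i \<in> e}. \<psi>E e (restrict (\<lambda>j. u ! j) e)\<bar> | i u. i < n \<and> u \<in> mrf_support n \<Omega>}"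

definition fl_mrf_instance ::
  "nat set \<Rightarrow> (nat \<Rightarrow> nat \<Rightarrow> real) \<Rightarrow> (nat \<Rightarrow> real) \<Rightarrow> nat \<Rightarrow> (nat \<Rightarrow> nat set)
     \<Rightarrow> nat set set \<Rightarrow> bool" where
  "fl_mrf_instance M d f n \<Omega> E \<longleftrightarrow>
     finite M \<and> M \<noteq> {} \<and> metric_on M d \<and> (\<forall>x\<in>M. 0 \<le> f x) \<and> 1 \<le> n \<and>
     (\<forall>i<n. \<Omega> i \<subseteq> M \<and> \<Omega> i \<noteq> {}) \<and> E \<subseteq> Pow {..<n}"

text \<open>Deterministic online algorithm: F xs = set of open facilities after the clients xs have
  arrived (only grows, irrevocable), \<sigma> (xs @ [x]) = open facility to which the newly arrived
  client x is (irrevocably) connected.  Both may depend on the known instance.\<close>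
definition online_alg :: "nat set \<Rightarrow> (nat list \<Rightarrow> nat set) \<Rightarrow> (nat list \<Rightarrow> nat) \<Rightarrow> bool" where
  "online_alg M F \<sigma> \<longleftrightarrow>
     (\<forall>xs. set xs \<subseteq> M \<longrightarrow> F xs \<subseteq> M) \<and>
     (\<forall>xs x. set xs \<subseteq> M \<and> x \<in> M \<longrightarrow> F xs \<subseteq> F (xs @ [x]) \<and> \<sigma> (xs @ [x]) \<in> F (xs @ [x]))"

definition alg_cost ::
  "(nat \<Rightarrow> nat \<Rightarrow> real) \<Rightarrow> (nat \<Rightarrow> real) \<Rightarrow> (nat list \<Rightarrow> nat set) \<Rightarrow> (nat list \<Rightarrow> nat)
     \<Rightarrow> nat list \<Rightarrow> real" where
  "alg_cost d f F \<sigma> u =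
     (\<Sum>x\<in>F u. f x) + (\<Sum>t<length u. d (u ! t) (\<sigma> (take (Suc t) u)))"

definition opt_cost :: "nat set \<Rightarrow> (nat \<Rightarrow> nat \<Rightarrow> real) \<Rightarrow> (nat \<Rightarrow> real) \<Rightarrow> nat list \<Rightarrow> real" where
  "opt_cost M d f u =
     Min {(\<Sum>x\<in>S. f x) + (\<Sum>t<length u. Min (d (u ! t) ` S)) | S. S \<subseteq> M \<and> S \<noteq> {}}"

text \<open>Randomized online algorithm = probability distribution R over deterministic online
  algorithms (random seed independent of the input); its expected cost on the MRF instance.\<close>
definition rand_alg_expected_cost ::
  "nat set \<Rightarrow> (nat \<Rightarrow> nat \<Rightarrow> real) \<Rightarrow> (nat \<Rightarrow> real) \<Rightarrow> nat \<Rightarrow> (nat \<Rightarrow> nat set)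
     \<Rightarrow> (nat \<Rightarrow> nat \<Rightarrow> real) \<Rightarrow> nat set set \<Rightarrow> (nat set \<Rightarrow> (nat \<Rightarrow> nat) \<Rightarrow> real)
     \<Rightarrow> ((nat list \<Rightarrow> nat set) \<times> (nat list \<Rightarrow> nat)) pmf \<Rightarrow> real" where
  "rand_alg_expected_cost M d f n \<Omega> \<psi>1 E \<psi>E R =
     measure_pmf.expectation R (\<lambda>(F, \<sigma>). mrf_expect n \<Omega> \<psi>1 E \<psi>E (alg_cost d f F \<sigma>))"

end

theory Submission
  imports Defs
begin


definition qq :: "nat \<Rightarrow> nat \<Rightarrow> nat" where "qq h i = h ^ (h - Suc i)"
definition rep :: "nat \<Rightarrow> nat \<Rightarrow> nat \<Rightarrow> nat" where "rep h i x = x div qq h i * qq h i"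
definition agL :: "nat \<Rightarrow> nat \<Rightarrow> nat \<Rightarrow> nat" where
  "agL h x y = card {j. j < h \<and> x div qq h j = y div qq h j}"
definition dd :: "nat \<Rightarrow> nat \<Rightarrow> nat \<Rightarrow> real" where
  "dd h x y = (if x = y then 0 else (1 / real h) ^ agL h x y)"

lemma qq_split: "i \<le> j \<Longrightarrow> j < h \<Longrightarrow> qq h i = qq h j * h ^ (j - i)"
  unfolding qq_def by (simp add: power_add[symmetric])

lemma agree_down:
  assumes "i \<le> j" "j < h" "x div qq h j = y div qq h j"
  shows "x div qq h i = y div qq h i"
  using assms by (simp add: qq_split[OF assms(1,2)] div_mult2_eq)

lemma agL_le: assumes "i < h" "x div qq h i \<noteq> y div qq h i" shows "agL h x y \<le> i"
proof -
  have "{j. j < h \<and> x div qq h j = y div qq h j} \<subseteq> {..<i}"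
  proof
    fix j assume "j \<in> {j. j < h \<and> x div qq h j = y div qq h j}"
    then have "j < h" "x div qq h j = y div qq h j" by auto
    show "j \<in> {..<i}"
    proof (rule ccontr)
      assume "j \<notin> {..<i}" then have "i \<le> j" by auto
      from agree_down[OF this \<open>j<h\<close> \<open>x div qq h j = y div qq h j\<close>] assms(2) show False by simp
    qed
  qed
  then have "agL h x y \<le> card {..<i}" unfolding agL_def by (rule card_mono[rotated]) simp
  then show ?thesis by simp
qed

lemma agL_ge: assumes "i < h" "x div qq h i = y div qq h i" shows "Suc i \<le> agL h x y"
proof -
  have "{..i} \<subseteq> {j. j < h \<and> x div qq h j = y div qq h j}"
  proof
    fix j assume "j \<in> {..i}"
    then have "j \<le> i" by simp
    then show "j \<in> {j. j < h \<and> x div qq h j = y div qq h j}"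
      using agree_down[OF _ assms(1,2)] assms(1) by simp
  qed
  moreover have "finite {j. j < h \<and> x div qq h j = y div qq h j}" by simp
  ultimately have "card {..i} \<le> agL h x y" unfolding agL_def by (rule card_mono[rotated])
  then show ?thesis by simp
qed

lemma agL_bound: "agL h x y \<le> h"
proof -
  have "agL h x y \<le> card {..<h}" unfolding agL_def by (rule card_mono) auto
  then show ?thesis by simp
qed

lemma agL_sym: "agL h x y = agL h y x"
  unfolding agL_def by (simp add: eq_commute)

lemma agL_min: "min (agL h x y) (agL h y z) \<le> agL h x z"
proof -
  have "{..<min (agL h x y) (agL h y z)} \<subseteq> {j. j < h \<and> x div qq h j = z div qq h j}"
  proof
    fix j assume j: "j \<in> {..<min (agL h x y) (agL h y z)}"
    then have jh: "j < h" using agL_bound[of h x y] by auto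
    have 1: "x div qq h j = y div qq h j"
      using agL_le[OF jh, of x y] j by (metis lessThan_iff min_less_iff_conj not_le)
    have 2: "y div qq h j = z div qq h j"
      using agL_le[OF jh, of y z] j by (metis lessThan_iff min_less_iff_conj not_le)
    show "j \<in> {j. j < h \<and> x div qq h j = z div qq h j}" using 1 2 jh by simp
  qed
  moreover have "finite {j. j < h \<and> x div qq h j = z div qq h j}" by simp
  ultimately have "card {..<min (agL h x y) (agL h y z)} \<le> agL h x z" unfolding agL_def by (rule card_mono[rotated])
  then show ?thesis by simp
qed

lemma dd_nonneg: "0 \<le> dd h x y" unfolding dd_def by auto
lemma dd_le1: "h \<ge> 1 \<Longrightarrow> dd h x y \<le> 1" unfolding dd_def by (auto intro!: power_le_one)
lemma dd_sym: "dd h x y = dd h y x" unfolding dd_def using agL_sym by auto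

lemma dd_tri: assumes "h \<ge> 2" shows "dd h x z \<le> dd h x y + dd h y z"
proof (cases "x = z")
  case True then show ?thesis using dd_nonneg by (simp add: dd_def)
next
  case xz: False
  show ?thesis
  proof (cases "x = y \<or> y = z")
    case True then show ?thesis using dd_nonneg[of h] by (auto simp: dd_def)
  next
    case False
    have b: "0 \<le> 1 / real h" "1 / real h \<le> 1" using assms by auto
    have "(1 / real h) ^ agL h x z \<le> (1 / real h) ^ min (agL h x y) (agL h y z)"
      by (rule power_decreasing[OF agL_min b])
    also have "\<dots> \<le> (1 / real h) ^ agL h x y + (1 / real h) ^ agL h y z"
      by (cases "agL h x y \<le> agL h y z") (auto simp: min_def)
    finally show ?thesis using False xz by (simp add: dd_def)
  qed
qed

lemma dd_zero_iff: "h \<ge> 1 \<Longrightarrow> dd h x y = 0 \<longleftrightarrow> x = y"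
  unfolding dd_def by auto

lemma dd_metric: "h \<ge> 2 \<Longrightarrow> metric_on M (dd h)"
  unfolding metric_on_def using dd_nonneg dd_sym dd_zero_iff[of h] dd_tri[of h]
  by (metis one_le_numeral order_trans)

lemma dd_far: assumes "i < h" "h \<ge> 1" "x div qq h i \<noteq> y div qq h i"
  shows "(1 / real h) ^ i \<le> dd h x y"
proof -
  have "x \<noteq> y" using assms by auto
  then show ?thesis unfolding dd_def using agL_le[OF assms(1,3)] assms(2)
    by (auto intro!: power_decreasing)
qed

lemma dd_near: assumes "i < h" "h \<ge> 1" "x div qq h i = y div qq h i"
  shows "dd h x y \<le> (1 / real h) ^ Suc i"
proof (cases "x = y")
  case True then show ?thesis by (simp add: dd_def)
next
  case False
  have "(1 / real h) ^ agL h x y \<le> (1 / real h) ^ Suc i"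
    by (rule power_decreasing[OF agL_ge[OF assms(1,3)]]) (use assms(2) in auto)
  then show ?thesis using False by (simp only: dd_def if_False)
qed



definition pl :: "nat \<Rightarrow> nat \<Rightarrow> nat list" where
  "pl h k = concat (map (\<lambda>i. replicate (h ^ i) i) [0..<k])"
definition st :: "nat \<Rightarrow> nat \<Rightarrow> nat" where "st h k = (\<Sum>i<k. h ^ i)"
definition ph :: "nat \<Rightarrow> nat \<Rightarrow> nat" where "ph h t = pl h h ! t"
definition nn :: "nat \<Rightarrow> nat" where "nn h = st h h"
definition seqc :: "nat \<Rightarrow> nat \<Rightarrow> nat list" where "seqc h x = map (\<lambda>i. rep h i x) (pl h h)"

lemma pl_0[simp]: "pl h 0 = []" by (simp add: pl_def)
lemma pl_Suc: "pl h (Suc k) = pl h k @ replicate (h ^ k) k" by (simp add: pl_def)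
lemma st_Suc: "st h (Suc k) = st h k + h ^ k" by (simp add: st_def)
lemma st_0[simp]: "st h 0 = 0" by (simp add: st_def)

lemma length_pl[simp]: "length (pl h k) = st h k"
  by (induction k) (simp_all add: pl_Suc st_Suc)

lemma st_mono: "k \<le> K \<Longrightarrow> st h k \<le> st h K"
  unfolding st_def by (rule sum_mono2) auto

lemma pl_take: "k \<le> K \<Longrightarrow> take (st h k) (pl h K) = pl h k"
proof (induction K)
  case 0 then show ?case by simp
next
  case (Suc K)
  show ?case
  proof (cases "k = Suc K")
    case True then show ?thesis by simp
  next
    case False
    then have "k \<le> K" using Suc.prems by simp
    then have "st h k \<le> st h K" by (rule st_mono)
    then show ?thesis using Suc.IH[OF \<open>k \<le> K\<close>] by (simp add: pl_Suc take_append)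
  qed
qed

lemma pl_nth: assumes "i < K" "st h i \<le> t" "t < st h (Suc i)" shows "pl h K ! t = i"
proof -
  have "pl h K ! t = take (st h (Suc i)) (pl h K) ! t" using assms(3) by simp
  also have "\<dots> = pl h (Suc i) ! t" using assms(1) by (simp add: pl_take)
  also have "\<dots> = i" using assms(2,3) by (simp add: pl_Suc nth_append st_Suc)
  finally show ?thesis .
qed

lemma set_pl: "set (pl h k) \<subseteq> {..<k}"
  by (induction k) (auto simp: pl_Suc)

lemma sorted_pl: "sorted (pl h k)"
proof (induction k)
  case 0 then show ?case by simp
next
  case (Suc k)
  have "\<forall>x\<in>set (pl h k). x \<le> k" using set_pl[of h k] by auto
  then show ?case using Suc by (auto simp: pl_Suc sorted_append)
qed

lemma ph_mono: "t \<le> t' \<Longrightarrow> t' < nn h \<Longrightarrow> ph h t \<le> ph h t'"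
  unfolding ph_def nn_def using sorted_pl[of h h] by (simp add: sorted_iff_nth_mono)

lemma ph_lt: "t < nn h \<Longrightarrow> ph h t < h"
proof -
  assume "t < nn h"
  then have "pl h h ! t \<in> set (pl h h)" by (simp add: nn_def)
  then show ?thesis using set_pl[of h h] unfolding ph_def by auto
qed

lemma st_pos: "h \<ge> 1 \<Longrightarrow> k \<ge> 1 \<Longrightarrow> st h k \<ge> 1"
proof -
  assume a: "h \<ge> 1" "k \<ge> 1"
  then obtain k' where "k = Suc k'" by (cases k) auto
  moreover have "h ^ k' \<ge> 1" using a by simp
  ultimately show ?thesis by (simp add: st_Suc)
qed

lemma ph_last: assumes "h \<ge> 1" shows "ph h (nn h - 1) = h - 1"
proof -
  have hs: "h = Suc (h - 1)" using assms by simp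
  have p: "h ^ (h - 1) \<ge> 1" using assms by simp
  have "st h h = st h (h - 1) + h ^ (h - 1)" using st_Suc[of h "h - 1"] hs by simp
  then have a: "st h (h - 1) \<le> st h h - 1" "st h h - 1 < st h (Suc (h - 1))" using p hs by (linarith, simp)
  show ?thesis unfolding ph_def nn_def
    by (rule pl_nth[of "h - 1" h h "st h h - 1", OF _ a]) (use assms in simp)
qed

lemma qq_pos: "h \<ge> 1 \<Longrightarrow> qq h i > 0" by (simp add: qq_def)

lemma rep_le: "rep h i x \<le> x" unfolding rep_def by (rule div_times_less_eq_dividend)
lemma rep_div: "h \<ge> 1 \<Longrightarrow> rep h i x div qq h i = x div qq h i"
  unfolding rep_def using qq_pos[of h i] by simp
lemma rep_rep: assumes "i \<le> j" "j < h" shows "rep h i (rep h j x) = rep h i x"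
proof -
  have h: "h \<ge> 1" using assms by simp
  have "rep h j x div qq h i = x div qq h i"
    unfolding rep_def qq_split[OF assms] using qq_pos[OF h, of j]
    by (simp add: div_mult2_eq)
  then show ?thesis unfolding rep_def by simp
qed
lemma rep_last: "h \<ge> 1 \<Longrightarrow> rep h (h - 1) x = x" by (simp add: rep_def qq_def)

lemma length_seqc[simp]: "length (seqc h x) = nn h" by (simp add: seqc_def nn_def)
lemma seqc_nth: "t < nn h \<Longrightarrow> seqc h x ! t = rep h (ph h t) x"
  by (simp add: seqc_def ph_def nn_def)
lemma take_seqc: "i \<le> h \<Longrightarrow> take (st h i) (seqc h x) = map (\<lambda>j. rep h j x) (pl h i)"
  by (simp add: seqc_def take_map pl_take)

lemma sum_list_pl: "sum_list (map g (pl h k)) = (\<Sum>i<k. real (h ^ i) * g i)"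
  by (induction k) (simp_all add: pl_Suc sum_list_replicate)

lemma sum_pl: "(\<Sum>t<nn h. g (ph h t)) = (\<Sum>i<h. real (h ^ i) * g i)"
proof -
  have "(\<Sum>t<nn h. g (ph h t)) = sum_list (map g (pl h h))"
    by (simp add: sum_list_sum_nth ph_def nn_def atLeast0LessThan)
  then show ?thesis by (simp add: sum_list_pl)
qed

lemma sum_phases: "(\<Sum>t<st h k. D t) = (\<Sum>i<k. \<Sum>t\<in>{st h i..<st h (Suc i)}. D t)"
proof (induction k)
  case 0 then show ?case by simp
next
  case (Suc k)
  have "(\<Sum>t<st h (Suc k). D t) = (\<Sum>t<st h k. D t) + (\<Sum>t\<in>{st h k..<st h (Suc k)}. D t)"
    using sum.atLeastLessThan_concat[of 0 "st h k" "st h (Suc k)" D] st_mono[of k "Suc k" h]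
    by (simp add: atLeast0LessThan)
  then show ?case using Suc by simp
qed

lemma card_phase: "card {st h i..<st h (Suc i)} = h ^ i" by (simp add: st_Suc)



lemma F_sub: "online_alg M F \<sigma> \<Longrightarrow> set xs \<subseteq> M \<Longrightarrow> F xs \<subseteq> M"
  unfolding online_alg_def by blast

lemma F_mono: assumes "online_alg M F \<sigma>" "set u \<subseteq> M" "a \<le> b" "b \<le> length u"
  shows "F (take a u) \<subseteq> F (take b u)"
  using assms(3,4)
proof (induction b)
  case 0 then show ?case by simp
next
  case (Suc b)
  show ?case
  proof (cases "a = Suc b")
    case True then show ?thesis by simp
  next
    case False
    then have ab: "a \<le> b" "b < length u" using Suc.prems by auto
    have tk: "take (Suc b) u = take b u @ [u ! b]" using ab(2) by (simp add: take_Suc_conv_app_nth)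
    have "set (take b u) \<subseteq> M" using assms(2) by (meson order_trans set_take_subset)
    moreover have "u ! b \<in> M" using assms(2) ab(2) by auto
    ultimately have "F (take b u) \<subseteq> F (take (Suc b) u)" using assms(1) unfolding online_alg_def tk by blast
    then show ?thesis using Suc.IH ab by auto
  qed
qed

lemma sigma_in: assumes "online_alg M F \<sigma>" "set u \<subseteq> M" "t < length u"
  shows "\<sigma> (take (Suc t) u) \<in> F (take (Suc t) u)"
proof -
  have tk: "take (Suc t) u = take t u @ [u ! t]" using assms(3) by (simp add: take_Suc_conv_app_nth)
  have "set (take t u) \<subseteq> M" using assms(2) by (meson order_trans set_take_subset)
  moreover have "u ! t \<in> M" using assms(2,3) by auto
  ultimately show ?thesis using assms(1) unfolding online_alg_def tk by blast
qed

definition lucky :: "nat \<Rightarrow> (nat list \<Rightarrow> nat set) \<Rightarrow> nat \<Rightarrow> nat \<Rightarrow> bool" where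
  "lucky h F i x = (\<exists>w\<in>F (take (st h i) (seqc h x)). w div qq h i = x div qq h i)"

lemma set_seqc: "h \<ge> 1 \<Longrightarrow> x < h ^ h \<Longrightarrow> set (seqc h x) \<subseteq> {..<h ^ h}"
  unfolding seqc_def using rep_le[of h _ x] by (auto intro: le_less_trans)

lemma alg_cost_eq: "alg_cost d (\<lambda>_. 1) F \<sigma> u = real (card (F u)) + (\<Sum>t<length u. d (u ! t) (\<sigma> (take (Suc t) u)))"
  by (simp add: alg_cost_def)

context
  fixes h :: nat and F :: "nat list \<Rightarrow> nat set" and \<sigma> :: "nat list \<Rightarrow> nat" and x :: nat
  assumes h2: "h \<ge> 2" and alg: "online_alg {..<h ^ h} F \<sigma>" and xX: "x < h ^ h"
begin

abbreviation "cu \<equiv> seqc h x"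
abbreviation "cFb i \<equiv> F (take (st h i) cu)"
abbreviation "cD t \<equiv> dd h (cu ! t) (\<sigma> (take (Suc t) cu))"

lemma h1: "h \<ge> 1" using h2 by simp
lemma uM: "set cu \<subseteq> {..<h ^ h}" using set_seqc[OF h1 xX] .

lemma Fb_fin: "finite (F (take k cu))"
  using F_sub[OF alg] uM by (meson finite_lessThan finite_subset order_trans set_take_subset)

lemma Fb_mono: "i \<le> j \<Longrightarrow> j \<le> h \<Longrightarrow> cFb i \<subseteq> cFb j"
  using F_mono[OF alg uM, of "st h i" "st h j"] st_mono[of i j h] st_mono[of j h h]
  by (simp add: nn_def)

lemma Fb_h: "cFb h = F cu" by (simp add: nn_def[symmetric])

lemma D_nonneg: "0 \<le> cD t" by (rule dd_nonneg)

lemma phase: assumes "i < h"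
  shows "1 - of_bool (lucky h F i x) \<le> (real (card (cFb (Suc i))) - real (card (cFb i))) + (\<Sum>t\<in>{st h i..<st h (Suc i)}. cD t)"
proof -
  have sub: "cFb i \<subseteq> cFb (Suc i)" using Fb_mono[of i "Suc i"] assms by simp
  have cm: "card (cFb i) \<le> card (cFb (Suc i))" using card_mono[OF Fb_fin sub] .
  have Dn: "0 \<le> (\<Sum>t\<in>{st h i..<st h (Suc i)}. cD t)" by (rule sum_nonneg) (rule D_nonneg)
  show ?thesis
  proof (cases "lucky h F i x \<or> cFb i \<noteq> cFb (Suc i)")
    case True
    then show ?thesis
    proof
      assume "lucky h F i x" then show ?thesis using cm Dn by simp
    next
      assume "cFb i \<noteq> cFb (Suc i)"
      then have "cFb i \<subset> cFb (Suc i)" using sub by auto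
      then have "card (cFb i) < card (cFb (Suc i))" using psubset_card_mono[OF Fb_fin] by blast
      then show ?thesis using Dn by simp
    qed
  next
    case False
    then have nl: "\<not> lucky h F i x" and eq: "cFb (Suc i) = cFb i" by auto
    have "(\<Sum>t\<in>{st h i..<st h (Suc i)}. (1 / real h) ^ i) \<le> (\<Sum>t\<in>{st h i..<st h (Suc i)}. cD t)"
    proof (rule sum_mono)
      fix t assume t: "t \<in> {st h i..<st h (Suc i)}"
      have tn: "t < nn h" using t st_mono[of "Suc i" h h] assms by (auto simp: nn_def)
      have pht: "ph h t = i" unfolding ph_def using pl_nth[of i h h t] t assms by auto
      have ut: "cu ! t = rep h i x" using seqc_nth[OF tn] pht by simp
      have "\<sigma> (take (Suc t) cu) \<in> F (take (Suc t) cu)" using sigma_in[OF alg uM] tn by simp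
      moreover have "F (take (Suc t) cu) \<subseteq> cFb (Suc i)"
        using F_mono[OF alg uM, of "Suc t" "st h (Suc i)"] t st_mono[of "Suc i" h h] assms
        by (simp add: nn_def)
      ultimately have "\<sigma> (take (Suc t) cu) \<in> cFb i" using eq by auto
      then have "\<sigma> (take (Suc t) cu) div qq h i \<noteq> x div qq h i" using nl unfolding lucky_def by blast
      then have "rep h i x div qq h i \<noteq> \<sigma> (take (Suc t) cu) div qq h i" using rep_div[OF h1] by simp
      then show "(1 / real h) ^ i \<le> cD t" using dd_far[OF assms h1] ut by simp
    qed
    also have "(\<Sum>t\<in>{st h i..<st h (Suc i)}. (1 / real h) ^ i) = 1"
      using card_phase[of h i] h1 by (simp add: power_one_over)
    finally show ?thesis using eq nl by simp
  qed
qed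

lemma alg_lb1: "(\<Sum>i<h. 1 - of_bool (lucky h F i x)) \<le> alg_cost (dd h) (\<lambda>_. 1) F \<sigma> cu"
proof -
  have "(\<Sum>i<h. 1 - of_bool (lucky h F i x)) \<le>
        (\<Sum>i<h. (real (card (cFb (Suc i))) - real (card (cFb i))) + (\<Sum>t\<in>{st h i..<st h (Suc i)}. cD t))"
    by (rule sum_mono) (rule phase, simp)
  also have "\<dots> = (real (card (cFb h)) - real (card (cFb 0))) + (\<Sum>t<st h h. cD t)"
    using sum_lessThan_telescope[of "\<lambda>i. real (card (cFb i))" h]
    by (simp add: sum.distrib sum_phases)
  also have "\<dots> \<le> real (card (F cu)) + (\<Sum>t<length cu. cD t)"
    using Fb_h by (simp add: nn_def)
  finally show ?thesis by (simp add: alg_cost_eq)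
qed

lemma alg_lb2: assumes "i \<le> h" shows "real (card (cFb i)) \<le> alg_cost (dd h) (\<lambda>_. 1) F \<sigma> cu"
proof -
  have "card (cFb i) \<le> card (F cu)" using card_mono[OF Fb_fin Fb_mono[OF assms order_refl]] Fb_h by simp
  moreover have "0 \<le> (\<Sum>t<length cu. cD t)" by (rule sum_nonneg) (rule D_nonneg)
  ultimately show ?thesis by (simp add: alg_cost_eq)
qed

end



lemma split_sum: fixes A Q :: nat shows "(\<Sum>x<A * Q. g x) = (\<Sum>b<A. \<Sum>r<Q. g (b * Q + r) :: real)"
proof (induction A)
  case 0 then show ?case by simp
next
  case (Suc A)
  have "(\<Sum>x<Suc A * Q. g x) = (\<Sum>x<A * Q. g x) + (\<Sum>x\<in>{A * Q..<A * Q + Q}. g x)"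
    using sum.atLeastLessThan_concat[of 0 "A * Q" "A * Q + Q" g] by (simp add: atLeast0LessThan add.commute)
  also have "(\<Sum>x\<in>{A * Q..<A * Q + Q}. g x) = (\<Sum>r<Q. g (A * Q + r))"
    using sum.shift_bounds_nat_ivl[of g 0 "A * Q" Q] by (simp add: atLeast0LessThan add.commute)
  finally show ?case using Suc by simp
qed

lemma lucky_avg:
  fixes m q A :: nat and \<phi> :: "nat \<Rightarrow> nat set"
  assumes m: "m > 0" and q: "q > 0"
    and dep: "\<And>x y. x div (m * q) = y div (m * q) \<Longrightarrow> \<phi> x = \<phi> y"
    and fin: "\<And>x. x < A * (m * q) \<Longrightarrow> finite (\<phi> x)"
  shows "real m * (\<Sum>x<A * (m * q). of_bool (\<exists>w\<in>\<phi> x. w div q = x div q)) \<le> (\<Sum>x<A * (m * q). real (card (\<phi> x)))"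
proof -
  let ?Q = "m * q"
  let ?g = "\<lambda>x. of_bool (\<exists>w\<in>\<phi> x. w div q = x div q) :: real"
  have key: "(\<Sum>r<?Q. ?g (b * ?Q + r)) \<le> real q * real (card (\<phi> (b * ?Q)))" if bA: "b < A" for b
  proof -
    have bQ: "b * ?Q < A * ?Q" using bA m q by simp
    note fin = fin[OF bQ]
    have "(\<Sum>r<?Q. ?g (b * ?Q + r)) = (\<Sum>c<m. \<Sum>s<q. ?g (b * ?Q + (c * q + s)))"
      by (rule split_sum)
    also have "\<dots> = (\<Sum>c<m. \<Sum>s<q. of_bool (\<exists>w\<in>\<phi> (b * ?Q). w div q = b * m + c))"
    proof (intro sum.cong refl)
      fix c s assume c: "c \<in> {..<m}" and s: "s \<in> {..<q}"
      have lt: "c * q + s < m * q"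
      proof -
        have "c * q + s < c * q + q" using s by simp
        also have "\<dots> = Suc c * q" by simp
        also have "\<dots> \<le> m * q" using c by (intro mult_right_mono) auto
        finally show ?thesis .
      qed
      have d1: "(b * ?Q + (c * q + s)) div ?Q = b" using lt m q by simp
      have d2: "(b * ?Q + (c * q + s)) div q = b * m + c"
      proof -
        have "b * ?Q + (c * q + s) = s + (b * m + c) * q" by (simp add: algebra_simps)
        then show ?thesis using s q by (simp only: div_mult_self1) simp
      qed
      have "\<phi> (b * ?Q + (c * q + s)) = \<phi> (b * ?Q)" by (rule dep) (use d1 m q in simp)
      then show "?g (b * ?Q + (c * q + s)) = of_bool (\<exists>w\<in>\<phi> (b * ?Q). w div q = b * m + c)"
        using d2 by simp
    qed
    also have "\<dots> = real q * (\<Sum>c<m. of_bool (\<exists>w\<in>\<phi> (b * ?Q). w div q = b * m + c))"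
      by (simp add: sum_distrib_left)
    also have "(\<Sum>c<m. of_bool (\<exists>w\<in>\<phi> (b * ?Q). w div q = b * m + c) :: real)
        = real (card {c\<in>{..<m}. \<exists>w\<in>\<phi> (b * ?Q). w div q = b * m + c})"
      by (simp add: sum.If_cases Int_def conj_commute)
    also have "card {c\<in>{..<m}. \<exists>w\<in>\<phi> (b * ?Q). w div q = b * m + c} \<le> card ((\<lambda>w. w div q - b * m) ` \<phi> (b * ?Q))"
    proof (rule card_mono)
      show "finite ((\<lambda>w. w div q - b * m) ` \<phi> (b * ?Q))" using fin by simp
      show "{c\<in>{..<m}. \<exists>w\<in>\<phi> (b * ?Q). w div q = b * m + c} \<subseteq> (\<lambda>w. w div q - b * m) ` \<phi> (b * ?Q)"
      proof
        fix c assume "c \<in> {c\<in>{..<m}. \<exists>w\<in>\<phi> (b * ?Q). w div q = b * m + c}"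
        then obtain w where "w \<in> \<phi> (b * ?Q)" "w div q = b * m + c" by auto
        then show "c \<in> (\<lambda>w. w div q - b * m) ` \<phi> (b * ?Q)" by (intro image_eqI[of _ _ w]) auto
      qed
    qed
    also have "\<dots> \<le> card (\<phi> (b * ?Q))" by (rule card_image_le[OF fin])
    finally show ?thesis by (simp add: mult_left_mono)
  qed
  have "real m * (\<Sum>x<A * ?Q. ?g x) = real m * (\<Sum>b<A. \<Sum>r<?Q. ?g (b * ?Q + r))"
    by (simp add: split_sum)
  also have "\<dots> \<le> real m * (\<Sum>b<A. real q * real (card (\<phi> (b * ?Q))))"
    by (intro mult_left_mono sum_mono key) auto
  also have "\<dots> = (\<Sum>b<A. \<Sum>r<?Q. real (card (\<phi> (b * ?Q + r))))"
  proof -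
    have "\<phi> (b * ?Q + r) = \<phi> (b * ?Q)" if "r < ?Q" for b r
      by (rule dep) (use that m q in simp)
    then show ?thesis by (simp add: sum_distrib_left mult.assoc)
  qed
  also have "\<dots> = (\<Sum>x<A * ?Q. real (card (\<phi> x)))" by (simp add: split_sum)
  finally show ?thesis .
qed

lemma alg_avg:
  assumes h2: "h \<ge> 2" and alg: "online_alg {..<h ^ h} F \<sigma>"
  shows "real h * real (h ^ h) \<le> 2 * (\<Sum>x<h ^ h. alg_cost (dd h) (\<lambda>_. 1) F \<sigma> (seqc h x))"
proof -
  have h1: "h \<ge> 1" using h2 by simp
  let ?N = "h ^ h"
  let ?a = "\<lambda>x. alg_cost (dd h) (\<lambda>_. 1) F \<sigma> (seqc h x)"
  let ?L = "\<lambda>i x. of_bool (lucky h F i x) :: real"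
  have each: "real h * (\<Sum>x<?N. ?L i x) \<le> (\<Sum>x<?N. ?a x)" if i: "i < h" for i
  proof -
    let ?\<phi> = "\<lambda>x. F (take (st h i) (seqc h x))"
    have N: "h ^ i * (h * qq h i) = ?N"
    proof -
      have "h ^ i * (h * qq h i) = h ^ (i + Suc (h - Suc i))" by (simp add: qq_def power_add)
      also have "i + Suc (h - Suc i) = h" using i by simp
      finally show ?thesis .
    qed
    have dep: "?\<phi> x = ?\<phi> y" if xy: "x div (h * qq h i) = y div (h * qq h i)" for x y
    proof -
      have "rep h j x = rep h j y" if j: "j \<in> set (pl h i)" for j
      proof -
        have ji: "j < i" using j set_pl[of h i] by auto
        have "qq h j = (h * qq h i) * h ^ (i - Suc j)"
        proof -
          have "qq h j = h ^ ((h - Suc i) + 1 + (i - Suc j))" unfolding qq_def using ji i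
            by (intro arg_cong[where f="\<lambda>k. h ^ k"]) simp
          then show ?thesis by (simp add: qq_def power_add)
        qed
        then show ?thesis unfolding rep_def using xy by (simp add: div_mult2_eq)
      qed
      then have m: "map (\<lambda>j. rep h j x) (pl h i) = map (\<lambda>j. rep h j y) (pl h i)" by (rule map_cong[OF refl])
      show ?thesis by (simp only: take_seqc[OF less_imp_le[OF i]] m)
    qed
    have fin: "finite (?\<phi> x)" if "x < h ^ i * (h * qq h i)" for x
      using Fb_fin[OF h2 alg, of x] that N by simp
    have "real h * (\<Sum>x<h ^ i * (h * qq h i). of_bool (\<exists>w\<in>?\<phi> x. w div qq h i = x div qq h i))
          \<le> (\<Sum>x<h ^ i * (h * qq h i). real (card (?\<phi> x)))"
      by (rule lucky_avg[OF _ qq_pos[OF h1] dep fin]) (use h1 in auto)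
    also have "\<dots> \<le> (\<Sum>x<?N. ?a x)" unfolding N
      by (rule sum_mono) (rule alg_lb2[OF h2 alg], use i in auto)
    finally show ?thesis unfolding N lucky_def .
  qed
  have "(\<Sum>x<?N. \<Sum>i<h. 1 - ?L i x) \<le> (\<Sum>x<?N. ?a x)"
    by (rule sum_mono) (rule alg_lb1[OF h2 alg], simp)
  moreover have "(\<Sum>x<?N. \<Sum>i<h. 1 - ?L i x) = real h * real ?N - (\<Sum>i<h. \<Sum>x<?N. ?L i x)"
  proof -
    have "(\<Sum>x<?N. \<Sum>i<h. 1 - ?L i x) = (\<Sum>x<?N. real h - (\<Sum>i<h. ?L i x))"
      by (simp only: sum_subtractf) simp
    also have "\<dots> = real h * real ?N - (\<Sum>x<?N. \<Sum>i<h. ?L i x)"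
      by (simp only: sum_subtractf) simp
    also have "(\<Sum>x<?N. \<Sum>i<h. ?L i x) = (\<Sum>i<h. \<Sum>x<?N. ?L i x)"
      by (rule sum.swap)
    finally show ?thesis .
  qed
  moreover have "real h * (\<Sum>i<h. \<Sum>x<?N. ?L i x) \<le> real h * (\<Sum>x<?N. ?a x)"
  proof -
    have "real h * (\<Sum>i<h. \<Sum>x<?N. ?L i x) = (\<Sum>i<h. real h * (\<Sum>x<?N. ?L i x))"
      by (simp add: sum_distrib_left)
    also have "\<dots> \<le> (\<Sum>i<h. (\<Sum>x<?N. ?a x))" by (rule sum_mono) (rule each, simp)
    also have "\<dots> = real h * (\<Sum>x<?N. ?a x)" by simp
    finally show ?thesis .
  qed
  then have "(\<Sum>i<h. \<Sum>x<?N. ?L i x) \<le> (\<Sum>x<?N. ?a x)" using h1 by simp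
  ultimately show ?thesis by linarith
qed



lemma opt_set_eq: "{(\<Sum>x\<in>S. f x) + (\<Sum>t<length u. Min (d (u ! t) ` S)) | S. S \<subseteq> M \<and> S \<noteq> {}}
   = (\<lambda>S. (\<Sum>x\<in>S. f x) + (\<Sum>t<length u. Min (d (u ! t) ` S))) ` {S. S \<subseteq> M \<and> S \<noteq> {}}"
  by auto

lemma opt_le: assumes "finite M" "S \<subseteq> M" "S \<noteq> {}"
  shows "opt_cost M d f u \<le> (\<Sum>x\<in>S. f x) + (\<Sum>t<length u. Min (d (u ! t) ` S))"
  unfolding opt_cost_def opt_set_eq using assms by (intro Min_le) auto

lemma opt_ge1: assumes "finite M" "M \<noteq> {}" "\<And>x y. 0 \<le> d x y"
  shows "1 \<le> opt_cost M d (\<lambda>_. 1) u"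
  unfolding opt_cost_def opt_set_eq
proof (rule Min.boundedI)
  show "finite ((\<lambda>S. (\<Sum>x\<in>S. 1) + (\<Sum>t<length u. Min (d (u ! t) ` S))) ` {S. S \<subseteq> M \<and> S \<noteq> {}})"
    using assms(1) by simp
  show "(\<lambda>S. (\<Sum>x\<in>S. 1) + (\<Sum>t<length u. Min (d (u ! t) ` S))) ` {S. S \<subseteq> M \<and> S \<noteq> {}} \<noteq> {}"
    using assms(2) by auto
  fix a assume "a \<in> (\<lambda>S. (\<Sum>x\<in>S. 1) + (\<Sum>t<length u. Min (d (u ! t) ` S))) ` {S. S \<subseteq> M \<and> S \<noteq> {}}"
  then obtain S where S: "S \<subseteq> M" "S \<noteq> {}" and a: "a = (\<Sum>x\<in>S. 1) + (\<Sum>t<length u. Min (d (u ! t) ` S))" by auto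
  have fS: "finite S" using S assms(1) finite_subset by auto
  then have "1 \<le> (\<Sum>x\<in>S. 1::real)" using S(2) by (simp add: Suc_leI card_gt_0_iff)
  moreover have "0 \<le> (\<Sum>t<length u. Min (d (u ! t) ` S))"
    by (rule sum_nonneg) (use fS S(2) assms(3) in \<open>auto intro!: Min.boundedI\<close>)
  ultimately show "1 \<le> a" using a by simp
qed

lemma opt_le_len: assumes "h \<ge> 1"
  shows "opt_cost {..<h ^ h} (dd h) (\<lambda>_. 1) u \<le> 1 + real (length u)"
proof -
  have "opt_cost {..<h ^ h} (dd h) (\<lambda>_. 1) u \<le> 1 + (\<Sum>t<length u. dd h (u ! t) 0)"
    using opt_le[of "{..<h ^ h}" "{0::nat}" "dd h" "\<lambda>_. 1" u] assms by simp
  also have "(\<Sum>t<length u. dd h (u ! t) 0) \<le> (\<Sum>t<length u. (1::real))"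
    using dd_le1[OF assms] by (intro sum_mono) auto
  finally show ?thesis by simp
qed

lemma opt_seq: assumes "h \<ge> 1" "x < h ^ h"
  shows "opt_cost {..<h ^ h} (dd h) (\<lambda>_. 1) (seqc h x) \<le> 2"
proof -
  have "opt_cost {..<h ^ h} (dd h) (\<lambda>_. 1) (seqc h x) \<le> (\<Sum>y\<in>{x}. 1) + (\<Sum>t<length (seqc h x). Min (dd h (seqc h x ! t) ` {x}))"
    using opt_le[of "{..<h ^ h}" "{x}" "dd h" "\<lambda>_. 1" "seqc h x"] assms by simp
  also have "\<dots> = 1 + (\<Sum>t<nn h. dd h (rep h (ph h t) x) x)"
    by (simp add: seqc_nth)
  also have "(\<Sum>t<nn h. dd h (rep h (ph h t) x) x) \<le> (\<Sum>t<nn h. (1 / real h) ^ Suc (ph h t))"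
  proof (rule sum_mono)
    fix t assume "t \<in> {..<nn h}"
    then have "ph h t < h" using ph_lt by auto
    then show "dd h (rep h (ph h t) x) x \<le> (1 / real h) ^ Suc (ph h t)"
      using dd_near[of "ph h t" h] rep_div[OF assms(1)] assms(1) by simp
  qed
  also have "\<dots> = (\<Sum>i<h. real (h ^ i) * (1 / real h) ^ Suc i)"
    by (rule sum_pl)
  also have "\<dots> = (\<Sum>i<h. 1 / real h)"
    using assms(1) by (intro sum.cong refl) (simp add: power_one_over)
  also have "\<dots> = 1" using assms(1) by simp
  finally show ?thesis by simp
qed



definition SS :: "nat \<Rightarrow> nat set \<Rightarrow> nat list set" where
  "SS k X = {u. length u = k \<and> (\<forall>i<k. u ! i \<in> X)}"

lemma SS_eq: "SS k X = {xs. set xs \<subseteq> X \<and> length xs = k}"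
  unfolding SS_def by (auto simp: in_set_conv_nth subset_iff)

lemma SS_finite: "finite X \<Longrightarrow> finite (SS k X)"
  unfolding SS_eq by (rule finite_lists_length_eq)

lemma SS_Suc: "SS (Suc k) X = (\<lambda>(x, v). x # v) ` (X \<times> SS k X)"
proof
  show "SS (Suc k) X \<subseteq> (\<lambda>(x, v). x # v) ` (X \<times> SS k X)"
  proof
    fix u assume u: "u \<in> SS (Suc k) X"
    then obtain x v where uxv: "u = x # v" and lv: "length v = k" unfolding SS_def by (auto simp: length_Suc_conv)
    have "x \<in> X" using u uxv unfolding SS_def by force
    moreover have "v \<in> SS k X" using u uxv lv unfolding SS_def by force
    ultimately show "u \<in> (\<lambda>(x, v). x # v) ` (X \<times> SS k X)" using uxv by force
  qed
next
  show "(\<lambda>(x, v). x # v) ` (X \<times> SS k X) \<subseteq> SS (Suc k) X"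
    unfolding SS_def by (auto simp: nth_Cons split: nat.splits)
qed

lemma chain_sum:
  fixes a :: "nat \<Rightarrow> nat \<Rightarrow> nat \<Rightarrow> real"
  assumes fin: "finite X" and col: "\<And>t y. y \<in> X \<Longrightarrow> (\<Sum>x\<in>X. a t x y) = c"
  shows "(\<Sum>u\<in>SS (Suc k) X. \<Prod>t<k. a t (u ! t) (u ! Suc t)) = real (card X) * c ^ k"
  using col
proof (induction k arbitrary: a)
  case 0
  have "SS (Suc 0) X = (\<lambda>x. [x]) ` X" unfolding SS_Suc by (auto simp: SS_def)
  moreover have "inj_on (\<lambda>x. [x]) X" by (auto simp: inj_on_def)
  ultimately show ?case by (simp add: sum.reindex card_image)
next
  case (Suc k)
  have inj: "inj_on (\<lambda>(x, v). x # v) (X \<times> SS (Suc k) X)" by (auto simp: inj_on_def)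
  have "(\<Sum>u\<in>SS (Suc (Suc k)) X. \<Prod>t<Suc k. a t (u ! t) (u ! Suc t))
      = (\<Sum>(x, v)\<in>X \<times> SS (Suc k) X. \<Prod>t<Suc k. a t ((x # v) ! t) ((x # v) ! Suc t))"
    unfolding SS_Suc[of "Suc k"] by (subst sum.reindex[OF inj]) (simp add: case_prod_beta)
  also have "\<dots> = (\<Sum>(x, v)\<in>X \<times> SS (Suc k) X. a 0 x (v ! 0) * (\<Prod>t<k. a (Suc t) (v ! t) (v ! Suc t)))"
    by (intro sum.cong refl) (auto simp del: prod.lessThan_Suc simp: prod.lessThan_Suc_shift)
  also have "\<dots> = (\<Sum>x\<in>X. \<Sum>v\<in>SS (Suc k) X. a 0 x (v ! 0) * (\<Prod>t<k. a (Suc t) (v ! t) (v ! Suc t)))"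
    by (rule sum.cartesian_product[symmetric])
  also have "\<dots> = (\<Sum>v\<in>SS (Suc k) X. \<Sum>x\<in>X. a 0 x (v ! 0) * (\<Prod>t<k. a (Suc t) (v ! t) (v ! Suc t)))"
    by (rule sum.swap)
  also have "\<dots> = (\<Sum>v\<in>SS (Suc k) X. c * (\<Prod>t<k. a (Suc t) (v ! t) (v ! Suc t)))"
  proof (intro sum.cong refl)
    fix v assume "v \<in> SS (Suc k) X"
    then have "v ! 0 \<in> X" unfolding SS_def by auto
    then show "(\<Sum>x\<in>X. a 0 x (v ! 0) * (\<Prod>t<k. a (Suc t) (v ! t) (v ! Suc t))) = c * (\<Prod>t<k. a (Suc t) (v ! t) (v ! Suc t))"
      using Suc.prems[of "v ! 0" 0] by (simp add: sum_distrib_right[symmetric])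
  qed
  also have "\<dots> = c * (real (card X) * c ^ k)"
    using Suc.IH[of "\<lambda>t. a (Suc t)"] Suc.prems by (simp add: sum_distrib_left[symmetric])
  finally show ?case by simp
qed

lemma expect_split:
  fixes w g :: "nat list \<Rightarrow> real"
  assumes fin: "finite S" and VS: "V \<subseteq> S" and wpos: "\<And>u. u \<in> S \<Longrightarrow> 0 \<le> w u"
    and gnn: "\<And>u. u \<in> S \<Longrightarrow> 0 \<le> g u"
  shows "(\<Sum>u\<in>V. w u * g u) \<le> (\<Sum>u\<in>S. w u * g u)"
  by (rule sum_mono2[OF fin VS]) (use wpos gnn VS in \<open>auto intro: mult_nonneg_nonneg\<close>)

lemma expect_upper:
  fixes w g :: "nat list \<Rightarrow> real"
  assumes fin: "finite S" and VS: "V \<subseteq> S" and wpos: "\<And>u. u \<in> S \<Longrightarrow> 0 \<le> w u"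
    and gB: "\<And>u. u \<in> S \<Longrightarrow> g u \<le> B"
  shows "(\<Sum>u\<in>S. w u * g u) \<le> (\<Sum>u\<in>V. w u * g u) + B * ((\<Sum>u\<in>S. w u) - (\<Sum>u\<in>V. w u))"
proof -
  have fV: "finite V" using fin VS finite_subset by auto
  have "(\<Sum>u\<in>S. w u * g u) = (\<Sum>u\<in>V. w u * g u) + (\<Sum>u\<in>S - V. w u * g u)"
    using sum.subset_diff[OF VS fin, of "\<lambda>u. w u * g u"] by simp
  moreover have "(\<Sum>u\<in>S - V. w u * g u) \<le> (\<Sum>u\<in>S - V. w u * B)"
    by (rule sum_mono) (use wpos gB in \<open>auto intro: mult_left_mono\<close>)
  moreover have "(\<Sum>u\<in>S - V. w u * B) = B * ((\<Sum>u\<in>S. w u) - (\<Sum>u\<in>V. w u))"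
    using sum.subset_diff[OF VS fin, of w] by (simp add: sum_distrib_left mult.commute)
  ultimately show ?thesis by linarith
qed



definition pp :: "nat \<Rightarrow> real" where "pp h = 4 * ln (real (h ^ h))"
definition EE :: "nat \<Rightarrow> nat set set" where "EE h = (\<lambda>t. {t, Suc t}) ` {..<nn h - 1}"
definition psiE :: "nat \<Rightarrow> nat set \<Rightarrow> (nat \<Rightarrow> nat) \<Rightarrow> real" where
  "psiE h e g = (if g (Min e) = rep h (ph h (Min e)) (g (Suc (Min e))) then 0 else - pp h)"
definition aa :: "nat \<Rightarrow> nat \<Rightarrow> nat \<Rightarrow> nat \<Rightarrow> real" where
  "aa h t x y = exp (if x = rep h (ph h t) y then 0 else - pp h)"
definition WW :: "nat \<Rightarrow> nat list \<Rightarrow> real" where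
  "WW h u = (\<Prod>t<nn h - 1. aa h t (u ! t) (u ! Suc t))"
definition cc :: "nat \<Rightarrow> real" where "cc h = 1 + (real (h ^ h) - 1) * exp (- pp h)"

lemma supp_eq: "mrf_support n (\<lambda>_. X) = SS n X" by (simp add: mrf_support_def SS_def)

lemma inj_pair: "inj_on (\<lambda>t::nat. {t, Suc t}) A"
proof (rule inj_onI)
  fix s t :: nat assume "{s, Suc s} = {t, Suc t}"
  then have "Min {s, Suc s} = Min {t, Suc t}" by simp
  then show "s = t" by simp
qed

lemma Min_pair[simp]: "Min {t, Suc t} = (t::nat)" by simp

lemma weight_eq: "mrf_weight (nn h) (\<lambda>_ _. 0) (EE h) (psiE h) u = WW h u"
proof -
  have "(\<Sum>e\<in>EE h. psiE h e (restrict (\<lambda>j. u ! j) e))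
      = (\<Sum>t<nn h - 1. psiE h {t, Suc t} (restrict (\<lambda>j. u ! j) {t, Suc t}))"
    unfolding EE_def by (subst sum.reindex[OF inj_pair]) simp
  also have "\<dots> = (\<Sum>t<nn h - 1. (if u ! t = rep h (ph h t) (u ! Suc t) then 0 else - pp h))"
    by (intro sum.cong refl) (simp add: psiE_def)
  finally show ?thesis unfolding mrf_weight_def WW_def aa_def by (simp add: exp_sum)
qed

lemma exp_mpp: "h \<ge> 1 \<Longrightarrow> exp (- pp h) = 1 / real (h ^ h) ^ 4"
proof -
  assume h: "h \<ge> 1"
  have pos: "real (h ^ h) > 0" using h by simp
  have "exp (pp h) = real (h ^ h) ^ 4"
    unfolding pp_def using exp_of_nat_mult[of 4 "ln (real (h ^ h))"] pos by simp
  then show ?thesis by (simp add: exp_minus field_simps)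
qed

lemma col_sum: assumes h: "h \<ge> 1" and y: "y \<in> {..<h ^ h}"
  shows "(\<Sum>x\<in>{..<h ^ h}. aa h t x y) = cc h"
proof -
  let ?r = "rep h (ph h t) y"
  have r: "?r \<in> {..<h ^ h}" using rep_le[of h "ph h t" y] y by auto
  have "(\<Sum>x\<in>{..<h ^ h}. aa h t x y) = aa h t ?r y + (\<Sum>x\<in>{..<h ^ h} - {?r}. aa h t x y)"
    using sum.remove[OF _ r] by simp
  also have "(\<Sum>x\<in>{..<h ^ h} - {?r}. aa h t x y) = (\<Sum>x\<in>{..<h ^ h} - {?r}. exp (- pp h))"
    by (intro sum.cong refl) (auto simp: aa_def)
  also have "\<dots> = (real (h ^ h) - 1) * exp (- pp h)"
    using r by (simp add: card_Diff_singleton of_nat_diff)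
  finally show ?thesis by (simp add: aa_def cc_def)
qed

lemma nn_ge2: "h \<ge> 2 \<Longrightarrow> nn h \<ge> 2"
proof -
  assume h: "h \<ge> 2"
  have "st h 2 \<le> st h h" using st_mono h by blast
  moreover have "st h 2 = 1 + h" by (simp add: st_def numeral_2_eq_2)
  ultimately show ?thesis using h by (simp add: nn_def)
qed

lemma st_le_pow: "h \<ge> 2 \<Longrightarrow> st h k \<le> h ^ k"
proof (induction k)
  case 0 then show ?case by simp
next
  case (Suc k)
  have "st h (Suc k) = st h k + h ^ k" by (rule st_Suc)
  also have "\<dots> \<le> 2 * h ^ k" using Suc by simp
  also have "\<dots> \<le> h * h ^ k" using Suc.prems by (intro mult_right_mono) auto
  finally show ?case by simp
qed

lemma ZZ_eq: assumes h: "h \<ge> 2"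
  shows "(\<Sum>u\<in>SS (nn h) {..<h ^ h}. WW h u) = real (h ^ h) * cc h ^ (nn h - 1)"
proof -
  obtain k where n: "nn h = Suc k" using nn_ge2[OF h] by (cases "nn h") auto
  have "(\<Sum>u\<in>SS (Suc k) {..<h ^ h}. \<Prod>t<k. aa h t (u ! t) (u ! Suc t)) = real (card {..<h ^ h}) * cc h ^ k"
    by (rule chain_sum) (use col_sum h in auto)
  then show ?thesis unfolding WW_def n by simp
qed

lemma seqc_SS: "h \<ge> 1 \<Longrightarrow> x < h ^ h \<Longrightarrow> seqc h x \<in> SS (nn h) {..<h ^ h}"
  unfolding SS_eq using set_seqc by auto

lemma WW_seqc: assumes h: "h \<ge> 1" shows "WW h (seqc h x) = 1"
  unfolding WW_def
proof (rule prod.neutral, rule ballI)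
  fix t assume "t \<in> {..<nn h - 1}"
  then have t: "t < nn h" "Suc t < nn h" by auto
  have le: "ph h t \<le> ph h (Suc t)" using ph_mono t by simp
  have lt: "ph h (Suc t) < h" using ph_lt t by simp
  show "aa h t (seqc h x ! t) (seqc h x ! Suc t) = 1"
    using rep_rep[OF le lt, of x] by (simp add: seqc_nth t aa_def)
qed

lemma seqc_inj: assumes h: "h \<ge> 2" shows "inj_on (seqc h) X"
proof (rule inj_onI)
  fix x y assume "seqc h x = seqc h y"
  then have "seqc h x ! (nn h - 1) = seqc h y ! (nn h - 1)" by simp
  moreover have "nn h - 1 < nn h" using nn_ge2[OF h] by simp
  ultimately show "x = y" using ph_last[of h] rep_last[of h] h by (simp add: seqc_nth)
qed

lemma WW_pos: "0 < WW h u" unfolding WW_def aa_def by (intro prod_pos) auto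



definition ZZ :: "nat \<Rightarrow> real" where "ZZ h = real (h ^ h) * cc h ^ (nn h - 1)"

lemma pp_nonneg: "h \<ge> 1 \<Longrightarrow> 0 \<le> pp h" unfolding pp_def by simp

lemma cc_ge1: "h \<ge> 1 \<Longrightarrow> 1 \<le> cc h"
  unfolding cc_def by (simp add: mult_nonneg_nonneg)

lemma ZZ_pos: "h \<ge> 1 \<Longrightarrow> 0 < ZZ h"
  unfolding ZZ_def using cc_ge1[of h] by (simp add: zero_less_mult_iff)

lemma ratio_bound: assumes h: "h \<ge> 2"
  shows "1 - 1 / real (h ^ h) ^ 2 \<le> real (h ^ h) / ZZ h"
proof -
  let ?N = "real (h ^ h)" and ?K = "nn h - 1"
  have h1: "h \<ge> 1" using h by simp
  have Npos: "?N \<ge> 1" using h1 by simp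
  define \<epsilon> where "\<epsilon> = real ?K * (cc h - 1)"
  have e_eq: "\<epsilon> = real ?K * ((?N - 1) / ?N ^ 4)"
    unfolding \<epsilon>_def cc_def exp_mpp[OF h1] using h1 by (simp; linarith)
  have K: "real ?K \<le> ?N" using st_le_pow[OF h, of h] unfolding nn_def by linarith
  have "\<epsilon> \<le> ?N * (?N / ?N ^ 4)" unfolding e_eq
    by (intro mult_mono divide_right_mono) (use K Npos in auto)
  also have "\<dots> = 1 / ?N ^ 2" using Npos by (simp add: power_def field_simps)
  finally have eb: "\<epsilon> \<le> 1 / ?N ^ 2" .
  have "cc h ^ ?K \<le> exp (cc h - 1) ^ ?K"
    by (rule power_mono) (use cc_ge1[OF h1] exp_ge_add_one_self[of "cc h - 1"] in auto)
  also have "\<dots> = exp \<epsilon>" unfolding \<epsilon>_def by (simp add: exp_of_nat_mult)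
  finally have ck: "cc h ^ ?K \<le> exp \<epsilon>" .
  have cpos: "0 < cc h ^ ?K" using cc_ge1[OF h1] by simp
  have "?N / ZZ h = 1 / cc h ^ ?K" unfolding ZZ_def
    by (rule nonzero_divide_mult_cancel_left) (use Npos in linarith)
  also have "\<dots> \<ge> 1 / exp \<epsilon>" using ck cpos by (intro divide_left_mono) auto
  finally have "exp (- \<epsilon>) \<le> ?N / ZZ h" by (simp add: exp_minus inverse_eq_divide)
  moreover have "1 - \<epsilon> \<le> exp (- \<epsilon>)" using exp_ge_add_one_self[of "- \<epsilon>"] by simp
  ultimately show ?thesis using eb by linarith
qed

lemma ZZ_ge: "h \<ge> 1 \<Longrightarrow> real (h ^ h) \<le> ZZ h"
  unfolding ZZ_def using cc_ge1[of h] by (simp add: one_le_power)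

lemma expect_eq: assumes h: "h \<ge> 2"
  shows "mrf_expect (nn h) (\<lambda>_. {..<h ^ h}) (\<lambda>_ _. 0) (EE h) (psiE h) g
       = (\<Sum>u\<in>SS (nn h) {..<h ^ h}. WW h u * g u) / ZZ h"
  unfolding mrf_expect_def mrf_prob_def supp_eq weight_eq ZZ_eq[OF h, folded ZZ_def]
  by (simp add: sum_divide_distrib)

lemma sum_V: assumes h: "h \<ge> 2"
  shows "(\<Sum>u\<in>seqc h ` {..<h ^ h}. WW h u * g u) = (\<Sum>x<h ^ h. g (seqc h x))"
  using h by (simp add: sum.reindex[OF seqc_inj[OF h]] WW_seqc)

lemma V_sub: "h \<ge> 1 \<Longrightarrow> seqc h ` {..<h ^ h} \<subseteq> SS (nn h) {..<h ^ h}"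
  using seqc_SS by auto

lemma E_alg: assumes h: "h \<ge> 2" and alg: "online_alg {..<h ^ h} F \<sigma>"
  shows "real h / 4 \<le> mrf_expect (nn h) (\<lambda>_. {..<h ^ h}) (\<lambda>_ _. 0) (EE h) (psiE h) (alg_cost (dd h) (\<lambda>_. 1) F \<sigma>)"
proof -
  have h1: "h \<ge> 1" using h by simp
  let ?g = "alg_cost (dd h) (\<lambda>_. 1) F \<sigma>"
  let ?N = "real (h ^ h)"
  have gnn: "0 \<le> ?g u" for u
    unfolding alg_cost_def by (intro add_nonneg_nonneg sum_nonneg dd_nonneg) auto
  have "(\<Sum>x<h ^ h. ?g (seqc h x)) \<le> (\<Sum>u\<in>SS (nn h) {..<h ^ h}. WW h u * ?g u)"
    unfolding sum_V[OF h, symmetric]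
    by (rule expect_split[OF SS_finite V_sub[OF h1]]) (use WW_pos gnn in \<open>auto intro: less_imp_le\<close>)
  moreover have "real h * ?N \<le> 2 * (\<Sum>x<h ^ h. ?g (seqc h x))" by (rule alg_avg[OF h alg])
  ultimately have a: "real h * ?N / 2 \<le> (\<Sum>u\<in>SS (nn h) {..<h ^ h}. WW h u * ?g u)" by simp
  have Zp: "0 < ZZ h" by (rule ZZ_pos[OF h1])
  have "real h * ?N / 2 / ZZ h \<le> mrf_expect (nn h) (\<lambda>_. {..<h ^ h}) (\<lambda>_ _. 0) (EE h) (psiE h) ?g"
    unfolding expect_eq[OF h] using a Zp by (intro divide_right_mono) auto
  moreover have "real h / 4 \<le> real h * ?N / 2 / ZZ h"
  proof -
    have N4: "?N \<ge> 4" using h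
    proof -
      have "h ^ 2 \<le> h ^ h" using h by (intro power_increasing) auto
      moreover have "4 \<le> h ^ 2" using h by (simp add: power2_eq_square mult_mono[of 2 h 2 h, simplified])
      ultimately show ?thesis by linarith
    qed
    have "4 * 1 \<le> ?N * ?N" by (rule mult_mono) (use N4 in auto)
    then have "1 / ?N ^ 2 \<le> 1 / 2" by (simp add: divide_simps power2_eq_square)
    then have "1 / 2 \<le> ?N / ZZ h" using ratio_bound[OF h] by linarith
    then have "real h * (1 / 2) \<le> real h * (?N / ZZ h)" by (intro mult_left_mono) auto
    then show ?thesis by (simp add: field_simps)
  qed
  ultimately show ?thesis by linarith
qed

lemma E_opt: assumes h: "h \<ge> 2"
  shows "mrf_expect (nn h) (\<lambda>_. {..<h ^ h}) (\<lambda>_ _. 0) (EE h) (psiE h) (opt_cost {..<h ^ h} (dd h) (\<lambda>_. 1)) \<le> 3"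
    and "0 < mrf_expect (nn h) (\<lambda>_. {..<h ^ h}) (\<lambda>_ _. 0) (EE h) (psiE h) (opt_cost {..<h ^ h} (dd h) (\<lambda>_. 1))"
proof -
  have h1: "h \<ge> 1" using h by simp
  let ?g = "opt_cost {..<h ^ h} (dd h) (\<lambda>_. 1)"
  let ?N = "real (h ^ h)"
  let ?S = "SS (nn h) {..<h ^ h}"
  let ?V = "seqc h ` {..<h ^ h}"
  let ?B = "1 + real (nn h)"
  have Zp: "0 < ZZ h" by (rule ZZ_pos[OF h1])
  have ne: "{..<h ^ h} \<noteq> {}" using h1 by (auto simp: lessThan_empty_iff)
  have g1: "1 \<le> ?g u" for u by (rule opt_ge1) (use ne dd_nonneg in auto)
  have gB: "?g u \<le> ?B" if "u \<in> ?S" for u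
    using opt_le_len[OF h1, of u] that by (simp add: SS_def)
  have WV: "(\<Sum>u\<in>?V. WW h u) = ?N"
    using sum_V[OF h, of "\<lambda>_. 1"] by simp
  have WS: "(\<Sum>u\<in>?S. WW h u) = ZZ h" using ZZ_eq[OF h] by (simp add: ZZ_def)
  have gV: "(\<Sum>u\<in>?V. WW h u * ?g u) \<le> 2 * ?N"
  proof -
    have "(\<Sum>x<h ^ h. ?g (seqc h x)) \<le> (\<Sum>x<h ^ h. 2)" by (rule sum_mono) (use opt_seq[OF h1] in auto)
    then show ?thesis using sum_V[OF h] by simp
  qed
  have e: "(\<Sum>u\<in>?S. WW h u * ?g u) \<le> (\<Sum>u\<in>?V. WW h u * ?g u) + ?B * ((\<Sum>u\<in>?S. WW h u) - (\<Sum>u\<in>?V. WW h u))"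
    by (rule expect_upper[OF SS_finite V_sub[OF h1]]) (use WW_pos gB in \<open>auto intro: less_imp_le\<close>)
  have up: "(\<Sum>u\<in>?S. WW h u * ?g u) \<le> 2 * ?N + ?B * (ZZ h - ?N)"
    using e gV unfolding WV WS by linarith
  have rb: "1 - 1 / ?N ^ 2 \<le> ?N / ZZ h" by (rule ratio_bound[OF h])
  have Npos: "?N \<ge> 1" using h1 by simp
  have nN: "real (nn h) \<le> ?N" using st_le_pow[OF h, of h] unfolding nn_def by linarith
  have "(\<Sum>u\<in>?S. WW h u * ?g u) / ZZ h \<le> (2 * ?N + ?B * (ZZ h - ?N)) / ZZ h"
    using up Zp by (intro divide_right_mono) auto
  also have "\<dots> = 2 * (?N / ZZ h) + ?B * (1 - ?N / ZZ h)" using Zp by (simp add: field_simps)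
  also have "\<dots> \<le> 2 * 1 + ?B * (1 / ?N ^ 2)"
  proof (intro add_mono mult_left_mono mult_right_mono)
    show "?N / ZZ h \<le> 1" using ZZ_ge[OF h1] Zp by simp
    show "1 - ?N / ZZ h \<le> 1 / ?N ^ 2" using rb by linarith
  qed auto
  also have "?B * (1 / ?N ^ 2) \<le> 1"
  proof -
    have "?B \<le> 2 * ?N" using nN Npos by linarith
    also have "2 * ?N \<le> ?N ^ 2"
    proof -
      have "h ^ 1 \<le> h ^ h" using h by (intro power_increasing) auto
      then have "real h \<le> ?N" by (metis of_nat_le_iff power_one_right)
      then have N2: "2 \<le> ?N" using h by linarith
      have "2 * ?N \<le> ?N * ?N" by (rule mult_right_mono) (use N2 in auto)
      then show ?thesis by (simp add: power2_eq_square)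
    qed
    finally show ?thesis using Npos by (simp add: divide_simps)
  qed
  finally show "mrf_expect (nn h) (\<lambda>_. {..<h ^ h}) (\<lambda>_ _. 0) (EE h) (psiE h) ?g \<le> 3"
    unfolding expect_eq[OF h] by simp
  have "(\<Sum>u\<in>?V. WW h u * 1) \<le> (\<Sum>u\<in>?V. WW h u * ?g u)"
    by (rule sum_mono) (use WW_pos g1 in \<open>auto intro: mult_left_mono less_imp_le\<close>)
  moreover have "(\<Sum>u\<in>?V. WW h u * ?g u) \<le> (\<Sum>u\<in>?S. WW h u * ?g u)"
    by (rule expect_split[OF SS_finite V_sub[OF h1]]) (use WW_pos g1 in \<open>auto intro: less_imp_le order_trans[OF zero_le_one]\<close>)
  ultimately have "?N \<le> (\<Sum>u\<in>?S. WW h u * ?g u)" using WV by simp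
  then show "0 < mrf_expect (nn h) (\<lambda>_. {..<h ^ h}) (\<lambda>_ _. 0) (EE h) (psiE h) ?g"
    unfolding expect_eq[OF h] using Zp Npos by simp
qed



lemma rep_zero[simp]: "rep h i 0 = 0" by (simp add: rep_def)

lemma EE_fin: "finite (EE h)" by (simp add: EE_def)

lemma psiE_abs: "h \<ge> 1 \<Longrightarrow> \<bar>psiE h e g\<bar> \<le> pp h"
  using pp_nonneg[of h] by (simp add: psiE_def)

definition Dset :: "nat \<Rightarrow> real set" where
  "Dset h = (\<lambda>(i, u). \<bar>\<Sum>e\<in>{e \<in> EE h. i \<in> e}. psiE h e (restrict (\<lambda>j. u ! j) e)\<bar>) ` ({..<nn h} \<times> SS (nn h) {..<h ^ h})"

lemma Delta_eq: "mrf_Delta (nn h) (\<lambda>_. {..<h ^ h}) (EE h) (psiE h) = Max (Dset h)"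
  unfolding mrf_Delta_def Dset_def supp_eq by (intro arg_cong[where f=Max]) auto

lemma Dset_fin: "finite (Dset h)" unfolding Dset_def by (intro finite_imageI finite_cartesian_product SS_finite) auto

lemma Delta_le: assumes h: "h \<ge> 2"
  shows "mrf_Delta (nn h) (\<lambda>_. {..<h ^ h}) (EE h) (psiE h) \<le> 2 * pp h"
  unfolding Delta_eq
proof (rule Max.boundedI[OF Dset_fin])
  have "0 < h ^ h" using h by simp
  then have "replicate (nn h) 0 \<in> SS (nn h) {..<h ^ h}" by (simp add: SS_def)
  moreover have "0 < nn h" using nn_ge2[OF h] by simp
  ultimately show "Dset h \<noteq> {}" unfolding Dset_def by blast
next
  have h1: "h \<ge> 1" using h by simp
  fix a assume "a \<in> Dset h"
  then obtain i u where a: "a = \<bar>\<Sum>e\<in>{e \<in> EE h. i \<in> e}. psiE h e (restrict (\<lambda>j. u ! j) e)\<bar>"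
    unfolding Dset_def by auto
  let ?A = "{e \<in> EE h. i \<in> e}"
  have sub: "?A \<subseteq> {{i, Suc i}, {i - 1, i}}"
  proof
    fix e assume "e \<in> ?A"
    then obtain t where e: "e = {t, Suc t}" and "i \<in> e" unfolding EE_def by auto
    then have "i = t \<or> i = Suc t" by auto
    then show "e \<in> {{i, Suc i}, {i - 1, i}}" using e by auto
  qed
  have cA: "card ?A \<le> 2"
  proof -
    have "card ?A \<le> card {{i, Suc i}, {i - 1, i}}" by (rule card_mono[OF _ sub]) simp
    also have "\<dots> \<le> 2" by (simp add: card_insert_le_m1)
    finally show ?thesis .
  qed
  have "a \<le> (\<Sum>e\<in>?A. \<bar>psiE h e (restrict (\<lambda>j. u ! j) e)\<bar>)" unfolding a by (rule sum_abs)
  also have "\<dots> \<le> (\<Sum>e\<in>?A. pp h)" by (rule sum_mono) (rule psiE_abs[OF h1])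
  also have "\<dots> = real (card ?A) * pp h" by simp
  also have "\<dots> \<le> 2 * pp h" using cA pp_nonneg[OF h1] by (intro mult_right_mono) auto
  finally show "a \<le> 2 * pp h" .
qed

lemma Delta_ge: assumes h: "h \<ge> 2"
  shows "pp h \<le> mrf_Delta (nn h) (\<lambda>_. {..<h ^ h}) (EE h) (psiE h)"
  unfolding Delta_eq
proof (rule Max_ge[OF Dset_fin])
  have h1: "h \<ge> 1" using h by simp
  have n2: "nn h \<ge> 2" by (rule nn_ge2[OF h])
  have Nge: "1 < h ^ h"
  proof -
    have "h ^ 1 \<le> h ^ h" using h by (intro power_increasing) auto
    then show ?thesis using h by (simp only: power_one_right)
  qed
  let ?u = "1 # replicate (nn h - 1) (0::nat)"
  have uS: "?u \<in> SS (nn h) {..<h ^ h}" using Nge n2 by (auto simp: SS_def nth_Cons split: nat.splits)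
  have A0: "{e \<in> EE h. 0 \<in> e} = {{0, Suc 0}}"
  proof
    show "{e \<in> EE h. 0 \<in> e} \<subseteq> {{0, Suc 0}}" unfolding EE_def by auto
    show "{{0, Suc 0}} \<subseteq> {e \<in> EE h. 0 \<in> e}" unfolding EE_def using n2
      by (auto intro!: image_eqI[of _ _ 0])
  qed
  have "\<bar>\<Sum>e\<in>{e \<in> EE h. 0 \<in> e}. psiE h e (restrict (\<lambda>j. ?u ! j) e)\<bar> = pp h"
    unfolding A0 using pp_nonneg[OF h1] n2 by (simp add: psiE_def)
  moreover have "(0, ?u) \<in> {..<nn h} \<times> SS (nn h) {..<h ^ h}" using uS n2 by simp
  ultimately show "pp h \<in> Dset h" unfolding Dset_def by (force intro: image_eqI[of _ _ "(0, ?u)"])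
qed

lemma rand_lb: assumes h: "h \<ge> 2" and R: "\<forall>(F, \<sigma>) \<in> set_pmf R. online_alg {..<h ^ h} F \<sigma>"
  shows "real h / 4 \<le> rand_alg_expected_cost {..<h ^ h} (dd h) (\<lambda>_. 1) (nn h) (\<lambda>_. {..<h ^ h}) (\<lambda>_ _. 0) (EE h) (psiE h) R"
proof -
  have h1: "h \<ge> 1" using h by simp
  let ?G = "\<lambda>(F, \<sigma>). mrf_expect (nn h) (\<lambda>_. {..<h ^ h}) (\<lambda>_ _. 0) (EE h) (psiE h) (alg_cost (dd h) (\<lambda>_. 1) F \<sigma>)"
  let ?Bd = "real (h ^ h) + real (nn h)"
  have bnd: "0 \<le> ?G p \<and> ?G p \<le> ?Bd" if p: "p \<in> set_pmf R" for p
  proof -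
    obtain F \<sigma> where pF: "p = (F, \<sigma>)" by (cases p)
    have alg: "online_alg {..<h ^ h} F \<sigma>" using R p pF by auto
    let ?g = "alg_cost (dd h) (\<lambda>_. 1) F \<sigma>"
    have gnn: "0 \<le> ?g u" for u
      unfolding alg_cost_def by (intro add_nonneg_nonneg sum_nonneg dd_nonneg) auto
    have gB: "?g u \<le> ?Bd" if u: "u \<in> SS (nn h) {..<h ^ h}" for u
    proof -
      have su: "set u \<subseteq> {..<h ^ h}" and lu: "length u = nn h" using u by (auto simp: SS_eq)
      have "F u \<subseteq> {..<h ^ h}" by (rule F_sub[OF alg su])
      then have "card (F u) \<le> h ^ h" using card_mono[of "{..<h ^ h}" "F u"] by simp
      moreover have "(\<Sum>t<length u. dd h (u ! t) (\<sigma> (take (Suc t) u))) \<le> (\<Sum>t<length u. 1)"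
        by (rule sum_mono) (rule dd_le1[OF h1])
      moreover have "real (card (F u)) \<le> real (h ^ h)" using calculation(1) by (simp only: of_nat_le_iff)
      moreover have "(\<Sum>t<length u. (1::real)) = real (nn h)" using lu by simp
      ultimately show ?thesis using lu unfolding alg_cost_eq by linarith
    qed
    have Zp: "0 < ZZ h" by (rule ZZ_pos[OF h1])
    have WS: "(\<Sum>u\<in>SS (nn h) {..<h ^ h}. WW h u) = ZZ h" using ZZ_eq[OF h] by (simp add: ZZ_def)
    have "(\<Sum>u\<in>SS (nn h) {..<h ^ h}. WW h u * ?g u) \<le> (\<Sum>u\<in>SS (nn h) {..<h ^ h}. WW h u * ?Bd)"
      by (rule sum_mono) (use gB WW_pos in \<open>auto intro: mult_left_mono less_imp_le\<close>)
    also have "\<dots> = ZZ h * ?Bd" using WS by (simp add: sum_distrib_right[symmetric])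
    finally have up: "(\<Sum>u\<in>SS (nn h) {..<h ^ h}. WW h u * ?g u) / ZZ h \<le> ?Bd"
      using Zp by (simp add: divide_simps mult.commute)
    have lo: "0 \<le> (\<Sum>u\<in>SS (nn h) {..<h ^ h}. WW h u * ?g u) / ZZ h"
      using Zp gnn WW_pos by (intro divide_nonneg_pos sum_nonneg mult_nonneg_nonneg) (auto intro: less_imp_le)
    show ?thesis using up lo unfolding pF by (simp add: expect_eq[OF h])
  qed
  have int: "integrable (measure_pmf R) ?G"
    by (rule measure_pmf.integrable_const_bound[where B = ?Bd]) (use bnd in \<open>auto simp: AE_measure_pmf_iff\<close>)
  have lbp: "real h / 4 \<le> ?G p" if p: "p \<in> set_pmf R" for p
  proof -
    obtain F \<sigma> where pF: "p = (F, \<sigma>)" by (cases p)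
    have alg: "online_alg {..<h ^ h} F \<sigma>" using R p pF by auto
    show ?thesis using E_alg[OF h alg] pF by simp
  qed
  have "measure_pmf.expectation R (\<lambda>_. real h / 4) \<le> measure_pmf.expectation R ?G"
    by (rule integral_mono_AE[OF _ int]) (use lbp in \<open>auto simp: AE_measure_pmf_iff\<close>)
  then show ?thesis unfolding rand_alg_expected_cost_def by simp
qed



lemma ln_h: assumes "h \<ge> 3" shows "2 / 3 \<le> ln (real h)"
proof -
  have hp: "0 < real h" using assms by simp
  have "ln (1 / real h) \<le> 1 / real h - 1" by (rule ln_le_minus_one) (use hp in simp)
  moreover have "ln (1 / real h) = - ln (real h)" using hp by (simp add: ln_div)
  moreover have "1 / real h \<le> 1 / 3" using assms by (simp add: divide_simps)
  ultimately show ?thesis by linarith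
qed

lemma pp_eq: "pp h = 4 * (real h * ln (real h))"
  unfolding pp_def by (simp add: ln_realpow)

theorem corollary5p4:
  shows "\<exists>c>0. \<forall>D0::real. \<exists>M d f n \<Omega> \<psi>1 E \<psi>E.
           fl_mrf_instance M d f n \<Omega> E \<and>
           mrf_Delta n \<Omega> E \<psi>E \<ge> D0 \<and>
           mrf_expect n \<Omega> \<psi>1 E \<psi>E (opt_cost M d f) > 0 \<and>
           (\<forall>R. (\<forall>(F, \<sigma>) \<in> set_pmf R. online_alg M F \<sigma>) \<longrightarrow>
              rand_alg_expected_cost M d f n \<Omega> \<psi>1 E \<psi>E R
                \<ge> c * (mrf_Delta n \<Omega> E \<psi>E / ln (mrf_Delta n \<Omega> E \<psi>E))
                    * mrf_expect n \<Omega> \<psi>1 E \<psi>E (opt_cost M d f))"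
proof (intro exI[of _ "1/96::real"] conjI allI)
  show "(0::real) < 1 / 96" by simp
  fix D0 :: real
  define h where "h = max 3 (nat \<lceil>D0\<rceil>)"
  have h3: "h \<ge> 3" unfolding h_def by simp
  have h2: "h \<ge> 2" and h1: "h \<ge> 1" using h3 by simp_all
  have hD: "D0 \<le> real h"
  proof -
    have "D0 \<le> real (nat \<lceil>D0\<rceil>)" by (rule real_nat_ceiling_ge)
    also have "\<dots> \<le> real h" unfolding h_def by simp
    finally show ?thesis .
  qed
  let ?M = "{..<h ^ h}"
  let ?\<Delta> = "mrf_Delta (nn h) (\<lambda>_. ?M) (EE h) (psiE h)"
  let ?EO = "mrf_expect (nn h) (\<lambda>_. ?M) (\<lambda>_ _. 0) (EE h) (psiE h) (opt_cost ?M (dd h) (\<lambda>_. 1))"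
  have lnh: "2 / 3 \<le> ln (real h)" by (rule ln_h[OF h3])
  have hpos: "0 < real h" using h3 by simp
  have pph: "real h \<le> pp h"
  proof -
    have "real h * (2 / 3) \<le> real h * ln (real h)" using lnh hpos by (intro mult_left_mono) auto
    then show ?thesis unfolding pp_eq by simp
  qed
  have D1: "pp h \<le> ?\<Delta>" by (rule Delta_ge[OF h2])
  have D2: "?\<Delta> \<le> 2 * pp h" by (rule Delta_le[OF h2])
  have EO3: "?EO \<le> 3" and EOp: "0 < ?EO" using E_opt[OF h2] by auto
  have inst: "fl_mrf_instance ?M (dd h) (\<lambda>_. 1) (nn h) (\<lambda>_. ?M) (EE h)"
    unfolding fl_mrf_instance_def
  proof (intro conjI allI impI)
    show "finite ?M" by simp
    show "?M \<noteq> {}" using h1 by (auto simp: lessThan_empty_iff)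
    show "metric_on ?M (dd h)" by (rule dd_metric[OF h2])
    show "\<forall>x\<in>?M. 0 \<le> (1::real)" by simp
    show "1 \<le> nn h" using nn_ge2[OF h2] by simp
    show "?M \<subseteq> ?M" by simp
    show "?M \<noteq> {}" using h1 by (auto simp: lessThan_empty_iff)
    show "EE h \<subseteq> Pow {..<nn h}" unfolding EE_def by auto
  qed
  have main: "rand_alg_expected_cost ?M (dd h) (\<lambda>_. 1) (nn h) (\<lambda>_. ?M) (\<lambda>_ _. 0) (EE h) (psiE h) R
      \<ge> 1 / 96 * (?\<Delta> / ln ?\<Delta>) * ?EO"
    if R: "\<forall>(F, \<sigma>) \<in> set_pmf R. online_alg ?M F \<sigma>" for R
  proof -
    have Dpos: "0 < ?\<Delta>" using D1 pph hpos by linarith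
    have lnD: "ln (real h) \<le> ln ?\<Delta>" using D1 pph hpos Dpos by simp
    have lnhp: "0 < ln (real h)" using lnh by linarith
    have "?\<Delta> / ln ?\<Delta> \<le> (2 * pp h) / ln (real h)"
      by (rule frac_le) (use D2 Dpos lnD lnhp in auto)
    also have "\<dots> = 8 * real h" unfolding pp_eq using lnhp by (simp add: field_simps)
    finally have r: "?\<Delta> / ln ?\<Delta> \<le> 8 * real h" .
    have r0: "0 \<le> ?\<Delta> / ln ?\<Delta>"
      by (rule divide_nonneg_nonneg) (use Dpos lnD lnhp in linarith)+
    have "1 / 96 * (?\<Delta> / ln ?\<Delta>) * ?EO \<le> 1 / 96 * (8 * real h) * 3"
      by (intro mult_mono mult_left_mono) (use r r0 EO3 EOp in auto)
    also have "\<dots> = real h / 4" by simp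
    also have "\<dots> \<le> rand_alg_expected_cost ?M (dd h) (\<lambda>_. 1) (nn h) (\<lambda>_. ?M) (\<lambda>_ _. 0) (EE h) (psiE h) R"
      by (rule rand_lb[OF h2 R])
    finally show ?thesis .
  qed
  show "\<exists>M d f n \<Omega> \<psi>1 E \<psi>E.
           fl_mrf_instance M d f n \<Omega> E \<and>
           mrf_Delta n \<Omega> E \<psi>E \<ge> D0 \<and>
           mrf_expect n \<Omega> \<psi>1 E \<psi>E (opt_cost M d f) > 0 \<and>
           (\<forall>R. (\<forall>(F, \<sigma>) \<in> set_pmf R. online_alg M F \<sigma>) \<longrightarrow>
              rand_alg_expected_cost M d f n \<Omega> \<psi>1 E \<psi>E R
                \<ge> 1 / 96 * (mrf_Delta n \<Omega> E \<psi>E / ln (mrf_Delta n \<Omega> E \<psi>E))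
                    * mrf_expect n \<Omega> \<psi>1 E \<psi>E (opt_cost M d f))"
    apply (rule exI[of _ ?M], rule exI[of _ "dd h"], rule exI[of _ "\<lambda>_. 1"], rule exI[of _ "nn h"],
        rule exI[of _ "\<lambda>_. ?M"], rule exI[of _ "\<lambda>_ _. 0"], rule exI[of _ "EE h"], rule exI[of _ "psiE h"])
    using inst D1 pph hD EOp main by auto
qed


end
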